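(* Let $\mathbf p$ be a reproduction law with $p_0=0$, $p_1<1$, let $\Gamma$ take values in $(1,\infty)$, and let $T$ be a $(\Gamma,\mathbf p)$-Galton–Watson tree with recursive lengths. Let $\phi$ and $\kappa$ be as defined below. Assume that $\mathbb E[\kappa(\phi(T))]$ and $\sum_{k\ge1}p_kk$ are finite. Then $\mathbb E[-\log(1-\Gamma_\varnothing^{-1})\,\kappa(\phi(T))]$ is finite if and only if $\mathbb E[-\log(1-\Gamma_\varnothing^{-1})]$ is finite.
   Context: Trees are leafless rooted planar trees encoded by finite words, root $\varnothing$, with an artificial parent $\varnothing_*$ of the root; a $(\Gamma,\mathbf p)$-Galton–Watson tree carries i.i.d. marks $\Gamma_x$. The random walk on $T\cup\{\varnothing_*\}$ goes from $\varnothing_*$ to $\varnothing$ with probability 1, and from $x$ to child $xi$ with probability $\Gamma_{xi}/(\Gamma_x-1+\sum_j\Gamma_{xj})$ and to its parent with probability $(\Gamma_x-1)/(\Gamma_x-1+\sum_j\Gamma_{xj})$. $\beta(T)$ is the probability that this walk started at $\varnothing$ never hits $\varnothing_*$, $\phi(T)=\Gamma_\varnothing\beta(T)$, and for $u>1$, $\kappa(u)=\mathbb E[uS/(u-1+S)]$ with $S=\sum_{j=1}^{\nu_{\tilde T}(\varnothing)}\phi(\tilde T[j])$, $\tilde T$ an independent copy of $T$. *)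

theory Defs
  imports "HOL-Probability.Probability"
begin

text \<open>Vertices are Ulam--Harris words (nat lists); the children of x are x@[j], j < N x.
  The artificial parent of the root is represented by None, vertex x by Some x.
  A marked tree is given by the offspring function N and the mark function G.\<close>

text \<open>Probability that the walk started at v hits the artificial parent within n steps.\<close>
fun hitp :: "(nat list \<Rightarrow> nat) \<Rightarrow> (nat list \<Rightarrow> real) \<Rightarrow> nat \<Rightarrow> nat list option \<Rightarrow> real" where
  "hitp N G 0 v = (if v = None then 1 else 0)"
| "hitp N G (Suc n) None = 1"
| "hitp N G (Suc n) (Some x) =
     (let D = G x - 1 + (\<Sum>j<N x. G (x @ [j]))
      in (G x - 1) / D * hitp N G n (if x = [] then None else Some (butlast x))
         + (\<Sum>j<N x. G (x @ [j]) / D * hitp N G n (Some (x @ [j]))))"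

text \<open>beta(T): probability that the walk started at the root never hits the artificial parent
  (= 1 - limit of the probabilities of hitting it within n steps).\<close>
definition beta_tree :: "(nat list \<Rightarrow> nat) \<Rightarrow> (nat list \<Rightarrow> real) \<Rightarrow> real" where
  "beta_tree N G = 1 - (SUP n. hitp N G n (Some []))"

definition phi_tree :: "(nat list \<Rightarrow> nat) \<Rightarrow> (nat list \<Rightarrow> real) \<Rightarrow> real" where
  "phi_tree N G = G [] * beta_tree N G"

text \<open>S = sum over the children j of the root of phi(T[j]); T[j] is the subtree rooted at [j].\<close>
definition S_tree :: "(nat list \<Rightarrow> nat) \<Rightarrow> (nat list \<Rightarrow> real) \<Rightarrow> real" where
  "S_tree N G = (\<Sum>j<N []. phi_tree (\<lambda>x. N (j # x)) (\<lambda>x. G (j # x)))"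

definition GW_tree :: "'a measure \<Rightarrow> nat pmf \<Rightarrow> real measure \<Rightarrow>
    (nat list \<Rightarrow> 'a \<Rightarrow> nat) \<Rightarrow> (nat list \<Rightarrow> 'a \<Rightarrow> real) \<Rightarrow> bool" where
  "GW_tree M p mu Nv Gam \<longleftrightarrow>
     prob_space M \<and>
     prob_space.indep_vars M (\<lambda>_. count_space UNIV \<Otimes>\<^sub>M borel) (\<lambda>x \<omega>. (Nv x \<omega>, Gam x \<omega>)) UNIV \<and>
     (\<forall>x. distr M (count_space UNIV \<Otimes>\<^sub>M borel) (\<lambda>\<omega>. (Nv x \<omega>, Gam x \<omega>)) = measure_pmf p \<Otimes>\<^sub>M mu)"

text \<open>kappa(u) = E[u S / (u - 1 + S)], S computed on an independent copy of T (only its law matters).\<close>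
definition kappa :: "'a measure \<Rightarrow> (nat list \<Rightarrow> 'a \<Rightarrow> nat) \<Rightarrow> (nat list \<Rightarrow> 'a \<Rightarrow> real) \<Rightarrow> real \<Rightarrow> ennreal" where
  "kappa M Nv Gam u = (\<integral>\<^sup>+ \<omega>. ennreal (u * S_tree (\<lambda>x. Nv x \<omega>) (\<lambda>x. Gam x \<omega>)
        / (u - 1 + S_tree (\<lambda>x. Nv x \<omega>) (\<lambda>x. Gam x \<omega>))) \<partial>M)"

end

theory Submission
  imports Defs
begin


definition Fp :: "(nat list \<Rightarrow> real) \<Rightarrow> nat list option \<Rightarrow> real" where
  "Fp G v = (case v of None \<Rightarrow> 1 | Some x \<Rightarrow> (\<Prod>k\<in>{..length x}. (1 - 1 / G (take k x))))"

lemma Fp_snoc: "Fp G (Some (x @ [j])) = (1 - 1 / G (x @ [j])) * Fp G (Some x)"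
proof -
  have "(\<Prod>k\<in>{..length (x@[j])}. (1 - 1 / G (take k (x@[j]))))
      = (1 - 1 / G (x @ [j])) * (\<Prod>k\<in>{..length x}. (1 - 1 / G (take k (x@[j]))))"
    by (simp add: prod.atMost_Suc)
  also have "(\<Prod>k\<in>{..length x}. (1 - 1 / G (take k (x@[j])))) = (\<Prod>k\<in>{..length x}. (1 - 1 / G (take k x)))"
    by (intro prod.cong) auto
  finally show ?thesis unfolding Fp_def by simp
qed

lemma Fp_parent: "Fp G (Some x) = (1 - 1 / G x) * Fp G (if x = [] then None else Some (butlast x))"
proof (cases "x = []")
  case True then show ?thesis by (simp add: Fp_def)
next
  case False
  then have "x = butlast x @ [last x]" by simp
  then have "Fp G (Some x) = (1 - 1 / G (butlast x @ [last x])) * Fp G (Some (butlast x))"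
    by (metis Fp_snoc)
  with False \<open>x = butlast x @ [last x]\<close> show ?thesis by simp
qed

lemma Fp_pos: assumes "\<And>x. 1 < G x" shows "0 < Fp G v"
proof (cases v)
  case None then show ?thesis by (simp add: Fp_def)
next
  case (Some x)
  have "0 < 1 - 1 / G (take k x)" for k
  proof -
    have "1 < G (take k x)" by (rule assms)
    then show ?thesis by (simp add: field_simps)
  qed
  then show ?thesis using Some unfolding Fp_def by (simp add: prod_pos)
qed

lemma hitp_bound:
  assumes N1: "\<And>x. 1 \<le> N x" and G1: "\<And>x. 1 < G x"
  shows "0 \<le> hitp N G n v \<and> hitp N G n v \<le> Fp G v"
proof (induction n arbitrary: v)
  case 0
  then show ?case using Fp_pos[where G=G and v=v, OF G1] by (auto simp: Fp_def)
next
  case (Suc n)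
  show ?case
  proof (cases v)
    case None then show ?thesis by (simp add: Fp_def)
  next
    case (Some x)
    define D where "D = G x - 1 + (\<Sum>j<N x. G (x @ [j]))"
    define par where "par = (if x = [] then None else Some (butlast x))"
    define P where "P = Fp G (Some x)"
    have Gx: "1 < G x" by (rule G1)
    have Gj: "\<And>j. 1 < G (x @ [j])" by (rule G1)
    have sum0: "0 \<le> (\<Sum>j<N x. G (x @ [j]))" 
    proof (intro sum_nonneg)
      fix j show "0 \<le> G (x @ [j])" using Gj[of j] by linarith
    qed
    have Gj0: "\<And>j. 0 \<le> G (x @ [j])" using Gj by (meson less_imp_le order_less_trans zero_less_one)
    have Dpos: "0 < D" unfolding D_def using Gx sum0 by linarith
    have Ppos: "0 < P" unfolding P_def by (rule Fp_pos[OF G1])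
    have Ppar: "P = (1 - 1 / G x) * Fp G par" unfolding P_def par_def by (rule Fp_parent)
    have eqpar: "(G x - 1) * Fp G par = G x * P"
      using Ppar Gx by (simp add: field_simps)
    have hv: "hitp N G (Suc n) v = (G x - 1) / D * hitp N G n par
         + (\<Sum>j<N x. G (x @ [j]) / D * hitp N G n (Some (x @ [j])))"
      using Some by (simp add: Let_def D_def par_def)
    have t1: "(G x - 1) / D * hitp N G n par \<le> G x * P / D"
    proof -
      have "(G x - 1) / D * hitp N G n par \<le> (G x - 1) / D * Fp G par"
        using Suc.IH[of par] Gx Dpos by (intro mult_left_mono) auto
      also have "\<dots> = G x * P / D" using eqpar by simp
      finally show ?thesis .
    qed
    have t2: "(\<Sum>j<N x. G (x @ [j]) / D * hitp N G n (Some (x @ [j])))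
        \<le> (\<Sum>j<N x. (G (x @ [j]) - 1) * P / D)"
    proof (intro sum_mono)
      fix j
      have "G (x @ [j]) / D * hitp N G n (Some (x @ [j])) \<le> G (x @ [j]) / D * Fp G (Some (x @ [j]))"
        using Suc.IH[of "Some (x @ [j])"] Gj[of j] Dpos by (intro mult_left_mono) auto
      also have "\<dots> = (G (x @ [j]) - 1) * P / D"
        unfolding Fp_snoc P_def using Gj[of j] Dpos by (simp add: field_simps)
      finally show "G (x @ [j]) / D * hitp N G n (Some (x @ [j])) \<le> (G (x @ [j]) - 1) * P / D" .
    qed
    have s2: "(\<Sum>j<N x. (G (x @ [j]) - 1) * P / D) = P / D * ((\<Sum>j<N x. G (x @ [j])) - real (N x))"
      by (simp add: sum_distrib_left sum_subtractf field_simps sum_divide_distrib[symmetric])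
    have "G x * P / D + P / D * ((\<Sum>j<N x. G (x @ [j])) - real (N x)) \<le> P"
    proof -
      have "G x + ((\<Sum>j<N x. G (x @ [j])) - real (N x)) \<le> D"
        unfolding D_def using N1[of x] by simp
      then have "P * (G x + ((\<Sum>j<N x. G (x @ [j])) - real (N x))) \<le> P * D"
        using Ppos by (intro mult_left_mono) auto
      then show ?thesis using Dpos by (simp add: field_simps)
    qed
    then have up: "hitp N G (Suc n) v \<le> P" using hv t1 t2 s2 by linarith
    have nn: "0 \<le> hitp N G (Suc n) v"
      unfolding hv using Suc.IH Gx Gj0 Dpos
      by (intro add_nonneg_nonneg sum_nonneg mult_nonneg_nonneg divide_nonneg_nonneg) (auto intro: less_imp_le)
    show ?thesis using up nn Some P_def by simp
  qed
qed

lemma phi_bounds: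
  assumes N1: "\<And>x. 1 \<le> N x" and G1: "\<And>x. 1 < G x"
  shows "1 \<le> phi_tree N G \<and> phi_tree N G \<le> G []"
proof -
  have b: "hitp N G n (Some []) \<le> 1 - 1 / G []" for n
  proof -
    have "0 \<le> hitp N G n (Some []) \<and> hitp N G n (Some []) \<le> Fp G (Some [])"
      by (rule hitp_bound[OF N1 G1])
    then show ?thesis by (simp add: Fp_def)
  qed
  have bdd: "bdd_above (range (\<lambda>n. hitp N G n (Some [])))" using b by (intro bdd_aboveI[where M="1 - 1 / G []"]) auto
  have s1: "(SUP n. hitp N G n (Some [])) \<le> 1 - 1 / G []" using b by (intro cSUP_least) auto
  have s0: "0 \<le> (SUP n. hitp N G n (Some []))"
    using cSUP_upper[OF _ bdd, of 0] by simp
  have g: "1 < G []" by (rule G1)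
  show ?thesis unfolding phi_tree_def beta_tree_def using s0 s1 g
    by (auto simp: field_simps)
qed

lemma S_ge1:
  assumes N1: "\<And>x. 1 \<le> N x" and G1: "\<And>x. 1 < G x"
  shows "1 \<le> S_tree N G"
proof -
  have "\<And>j. 1 \<le> phi_tree (\<lambda>x. N (j # x)) (\<lambda>x. G (j # x))"
    using phi_bounds[of "\<lambda>x. N (_ # x)" "\<lambda>x. G (_ # x)"] N1 G1 by blast
  then have "(\<Sum>j<N []. (1::real)) \<le> S_tree N G" unfolding S_tree_def by (intro sum_mono) auto
  then show ?thesis using N1[of "[]"] by simp
qed



lemma emeasure_pair_pmf:
  fixes p :: "'c pmf" and mu :: "'b measure"
  assumes "X \<in> sets (measure_pmf p \<Otimes>\<^sub>M mu)"
  shows "emeasure (measure_pmf p \<Otimes>\<^sub>M mu) X = (\<integral>\<^sup>+ x. \<integral>\<^sup>+ y. indicator X (x, y) \<partial>mu \<partial>measure_pmf p)"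
    (is "_ = ?\<mu> X")
proof (rule emeasure_measure_of[OF pair_measure_def])
  show "positive (sets (measure_pmf p \<Otimes>\<^sub>M mu)) ?\<mu>"
    by (auto simp: positive_def)
  have eq[simp]: "\<And>A x y. indicator A (x, y) = indicator (Pair x -` A) y"
    by (auto simp: indicator_def)
  show "countably_additive (sets (measure_pmf p \<Otimes>\<^sub>M mu)) ?\<mu>"
  proof (rule countably_additiveI)
    fix F :: "nat \<Rightarrow> ('c \<times> 'b) set" assume F: "range F \<subseteq> sets (measure_pmf p \<Otimes>\<^sub>M mu)" "disjoint_family F"
    from F have *: "\<And>i. F i \<in> sets (measure_pmf p \<Otimes>\<^sub>M mu)" by auto
    moreover have "\<And>x. disjoint_family (\<lambda>i. Pair x -` F i)"
      by (intro disjoint_family_on_bisimulation[OF F(2)]) auto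
    moreover have "\<And>x. range (\<lambda>i. Pair x -` F i) \<subseteq> sets mu"
      using F by (auto simp: sets_Pair1)
    ultimately show "(\<Sum>n. ?\<mu> (F n)) = ?\<mu> (\<Union>i. F i)"
      by (auto simp add: nn_integral_suminf[symmetric] vimage_UN suminf_emeasure
               intro!: nn_integral_cong nn_integral_indicator[symmetric])
  qed
  show "{a \<times> b |a b. a \<in> sets (measure_pmf p) \<and> b \<in> sets mu} \<subseteq> Pow (space (measure_pmf p) \<times> space mu)"
    using sets.space_closed[of mu] by auto
qed fact


lemma log_ineq:
  fixes t :: real assumes "1 < t"
  shows "0 \<le> - ln (1 - 1 / t) \<and> - ln (1 - 1 / t) * t \<le> 2 * (- ln (1 - 1 / t)) + 2"
proof -
  have a: "0 < 1 - 1 / t" "1 - 1 / t \<le> 1" using assms by (auto simp: field_simps)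
  have L0: "0 \<le> - ln (1 - 1 / t)" using a by simp
  have eq: "- ln (1 - 1 / t) = ln (t / (t - 1))"
  proof -
    have e1: "1 - 1 / t = (t - 1) / t" using assms by (simp add: field_simps)
    have "ln ((t - 1) / t) = ln (t - 1) - ln t" using assms by (simp add: ln_div)
    moreover have "ln (t / (t - 1)) = ln t - ln (t - 1)" using assms by (simp add: ln_div)
    ultimately show ?thesis using e1 by simp
  qed
  have Lb: "- ln (1 - 1 / t) \<le> 1 / (t - 1)"
  proof -
    have "ln (t / (t - 1)) \<le> t / (t - 1) - 1" using assms by (intro ln_le_minus_one) auto
    also have "\<dots> = 1 / (t - 1)" using assms by (simp add: diff_divide_distrib[symmetric] divide_simps)
    finally show ?thesis using eq by simp
  qed
  show ?thesis
  proof (cases "t \<le> 2")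
    case True
    then have "- ln (1 - 1 / t) * t \<le> - ln (1 - 1 / t) * 2" using L0 by (intro mult_left_mono) auto
    then show ?thesis using L0 by simp
  next
    case False
    have "- ln (1 - 1 / t) * t \<le> 1 / (t - 1) * t" using Lb assms by (intro mult_right_mono) auto
    also have "\<dots> \<le> 2"
    proof -
      have "0 < t - 1" using assms by simp
      moreover have "t \<le> 2 * (t - 1)" using False by simp
      ultimately show ?thesis by (simp add: divide_le_eq)
    qed
    finally show ?thesis using L0 by simp
  qed
qed


theorem mainTheorem7:
  fixes M :: "'a measure" and p :: "nat pmf" and mu :: "real measure"
    and Nv :: "nat list \<Rightarrow> 'a \<Rightarrow> nat" and Gam :: "nat list \<Rightarrow> 'a \<Rightarrow> real"
  assumes GW: "GW_tree M p mu Nv Gam"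
    and p0: "pmf p 0 = 0" and p1: "pmf p 1 < 1"
    and Gam_gt1: "AE g in mu. 1 < g"
    and kappa_fin: "(\<integral>\<^sup>+ \<omega>. kappa M Nv Gam (phi_tree (\<lambda>x. Nv x \<omega>) (\<lambda>x. Gam x \<omega>)) \<partial>M) < \<infinity>"
    and mean_fin: "(\<integral>\<^sup>+ k. ennreal (real k) \<partial>measure_pmf p) < \<infinity>"
  shows "(\<integral>\<^sup>+ \<omega>. ennreal (- ln (1 - 1 / Gam [] \<omega>))
              * kappa M Nv Gam (phi_tree (\<lambda>x. Nv x \<omega>) (\<lambda>x. Gam x \<omega>)) \<partial>M) < \<infinity>
         \<longleftrightarrow> (\<integral>\<^sup>+ \<omega>. ennreal (- ln (1 - 1 / Gam [] \<omega>)) \<partial>M) < \<infinity>"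
proof -
  have PS: "prob_space M"
    and IV: "prob_space.indep_vars M (\<lambda>_. count_space UNIV \<Otimes>\<^sub>M borel) (\<lambda>x \<omega>. (Nv x \<omega>, Gam x \<omega>)) UNIV"
    and DI: "\<And>x. distr M (count_space UNIV \<Otimes>\<^sub>M borel) (\<lambda>\<omega>. (Nv x \<omega>, Gam x \<omega>)) = measure_pmf p \<Otimes>\<^sub>M mu"
    using GW unfolding GW_tree_def by auto
  interpret prob_space M by (rule PS)
  have meas: "(\<lambda>\<omega>. (Nv x \<omega>, Gam x \<omega>)) \<in> measurable M (count_space UNIV \<Otimes>\<^sub>M borel)" for x
    using IV unfolding indep_vars_def2 by auto
  have measG: "Gam [] \<in> borel_measurable M"
    using measurable_compose[OF meas[of "[]"] measurable_snd] by simp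
  have AEx: "AE \<omega> in M. 1 \<le> Nv x \<omega> \<and> 1 < Gam x \<omega>" for x
  proof -
    let ?MM = "count_space UNIV \<Otimes>\<^sub>M borel :: (nat \<times> real) measure"
    let ?PM = "measure_pmf p \<Otimes>\<^sub>M mu"
    have setP: "{z \<in> space ?MM. 1 \<le> fst z \<and> 1 < snd z} \<in> sets ?MM" by measurable
    have setsPM: "sets ?PM = sets ?MM" by (metis DI sets_distr)
    have spacePM: "space ?PM = space ?MM" using sets_eq_imp_space_eq[OF setsPM] .
    have "AE z in ?PM. 1 \<le> fst z \<and> 1 < snd z"
    proof (rule AE_I')
      let ?A = "{z \<in> space ?PM. \<not> (1 \<le> fst z \<and> 1 < snd z)}"
      have Aeq: "?A = space ?MM - {z \<in> space ?MM. 1 \<le> fst z \<and> 1 < snd z}"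
        using spacePM by auto
      have Asets: "?A \<in> sets ?PM" unfolding setsPM Aeq using setP by auto
      have inner: "(\<integral>\<^sup>+ y. indicator ?A (x, y) \<partial>mu) = 0" if "x \<noteq> 0" for x :: nat
      proof -
        have "(\<integral>\<^sup>+ y. indicator ?A (x, y) \<partial>mu) = (\<integral>\<^sup>+ y. 0 \<partial>mu)"
          using Gam_gt1 that by (intro nn_integral_cong_AE) (auto elim!: eventually_mono simp: indicator_def)
        then show ?thesis by simp
      qed
      have "emeasure ?PM ?A = (\<integral>\<^sup>+ x. \<integral>\<^sup>+ y. indicator ?A (x, y) \<partial>mu \<partial>measure_pmf p)"
        by (rule emeasure_pair_pmf[OF Asets])
      also have "\<dots> = (\<integral>\<^sup>+ x. 0 \<partial>measure_pmf p)"
      proof (intro nn_integral_cong_AE)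
        have "AE x in measure_pmf p. x \<in> set_pmf p" by (rule AE_measure_pmf)
        then show "AE x in measure_pmf p. (\<integral>\<^sup>+ y. indicator ?A (x, y) \<partial>mu) = 0"
        proof (rule eventually_mono)
          fix x assume "x \<in> set_pmf p"
          then have "x \<noteq> 0" using p0 by (metis set_pmf_iff)
          then show "(\<integral>\<^sup>+ y. indicator ?A (x, y) \<partial>mu) = 0" by (rule inner)
        qed
      qed
      also have "\<dots> = 0" by simp
      finally show "?A \<in> null_sets ?PM" using Asets by auto
    qed simp
    then have "AE z in distr M ?MM (\<lambda>\<omega>. (Nv x \<omega>, Gam x \<omega>)). 1 \<le> fst z \<and> 1 < snd z"
      by (simp only: DI[of x])
    then show ?thesis using AE_distr_iff[OF meas[of x] setP] by simp
  qed
  have AEall: "AE \<omega> in M. \<forall>x. 1 \<le> Nv x \<omega> \<and> 1 < Gam x \<omega>"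
    using AEx by (simp add: AE_all_countable)
  have kb: "1 \<le> kappa M Nv Gam u \<and> kappa M Nv Gam u \<le> ennreal u" if u1: "1 \<le> u" for u
  proof -
    have AEr: "AE \<omega> in M. 1 \<le> u * S_tree (\<lambda>x. Nv x \<omega>) (\<lambda>x. Gam x \<omega>) / (u - 1 + S_tree (\<lambda>x. Nv x \<omega>) (\<lambda>x. Gam x \<omega>))
       \<and> u * S_tree (\<lambda>x. Nv x \<omega>) (\<lambda>x. Gam x \<omega>) / (u - 1 + S_tree (\<lambda>x. Nv x \<omega>) (\<lambda>x. Gam x \<omega>)) \<le> u"
      using AEall
    proof (rule eventually_mono)
      fix \<omega> assume h: "\<forall>x. 1 \<le> Nv x \<omega> \<and> 1 < Gam x \<omega>"
      define S where "S = S_tree (\<lambda>x. Nv x \<omega>) (\<lambda>x. Gam x \<omega>)"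
      have S1: "1 \<le> S" unfolding S_def using h by (intro S_ge1) auto
      have Dp: "0 < u - 1 + S" using S1 u1 by linarith
      have lo: "1 \<le> u * S / (u - 1 + S)"
      proof -
        have "u - 1 + S \<le> u * S"
        proof -
          have "0 \<le> (u - 1) * (S - 1)" using S1 u1 by simp
          then show ?thesis by (simp add: algebra_simps)
        qed
        then show ?thesis using Dp by (simp add: le_divide_eq)
      qed
      have up: "u * S / (u - 1 + S) \<le> u"
      proof -
        have "u * S \<le> u * (u - 1 + S)" using u1 S1 by (intro mult_left_mono) auto
        then show ?thesis using Dp by (simp add: divide_le_eq)
      qed
      show "1 \<le> u * S_tree (\<lambda>x. Nv x \<omega>) (\<lambda>x. Gam x \<omega>) / (u - 1 + S_tree (\<lambda>x. Nv x \<omega>) (\<lambda>x. Gam x \<omega>))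
       \<and> u * S_tree (\<lambda>x. Nv x \<omega>) (\<lambda>x. Gam x \<omega>) / (u - 1 + S_tree (\<lambda>x. Nv x \<omega>) (\<lambda>x. Gam x \<omega>)) \<le> u"
        using lo up unfolding S_def by simp
    qed
    have "(\<integral>\<^sup>+ \<omega>. 1 \<partial>M) \<le> kappa M Nv Gam u"
      unfolding kappa_def using AEr by (intro nn_integral_mono_AE) (auto elim!: eventually_mono)
    moreover have "kappa M Nv Gam u \<le> (\<integral>\<^sup>+ \<omega>. ennreal u \<partial>M)"
      unfolding kappa_def by (intro nn_integral_mono_AE eventually_mono[OF AEr] ennreal_leI) auto
    ultimately show ?thesis by (simp add: emeasure_space_1)
  qed
  define L where "L = (\<lambda>\<omega>. - ln (1 - 1 / Gam [] \<omega>))"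
  define K where "K = (\<lambda>\<omega>. kappa M Nv Gam (phi_tree (\<lambda>x. Nv x \<omega>) (\<lambda>x. Gam x \<omega>)))"
  have AEK: "AE \<omega> in M. 1 \<le> K \<omega> \<and> ennreal (L \<omega>) * K \<omega> \<le> 2 * ennreal (L \<omega>) + 2"
    using AEall
  proof (rule eventually_mono)
    fix \<omega> assume h: "\<forall>x. 1 \<le> Nv x \<omega> \<and> 1 < Gam x \<omega>"
    define ph where "ph = phi_tree (\<lambda>x. Nv x \<omega>) (\<lambda>x. Gam x \<omega>)"
    have phb: "1 \<le> ph \<and> ph \<le> Gam [] \<omega>" unfolding ph_def using h by (intro phi_bounds) auto
    have k: "1 \<le> K \<omega> \<and> K \<omega> \<le> ennreal ph" unfolding K_def ph_def[symmetric] using kb phb by auto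
    have g1: "1 < Gam [] \<omega>" using h by auto
    have li: "0 \<le> L \<omega> \<and> L \<omega> * Gam [] \<omega> \<le> 2 * L \<omega> + 2" unfolding L_def using log_ineq[OF g1] by simp
    have "ennreal (L \<omega>) * K \<omega> \<le> ennreal (L \<omega>) * ennreal (Gam [] \<omega>)"
      using k phb by (intro mult_left_mono) (auto intro: order_trans ennreal_leI)
    also have "\<dots> = ennreal (L \<omega> * Gam [] \<omega>)" using li g1 by (simp add: ennreal_mult)
    also have "\<dots> \<le> ennreal (2 * L \<omega> + 2)" using li by (intro ennreal_leI) simp
    also have "\<dots> = 2 * ennreal (L \<omega>) + 2" using li by (simp add: ennreal_plus ennreal_mult)
    finally show "1 \<le> K \<omega> \<and> ennreal (L \<omega>) * K \<omega> \<le> 2 * ennreal (L \<omega>) + 2" using k by simp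
  qed
  have measL: "(\<lambda>\<omega>. ennreal (L \<omega>)) \<in> borel_measurable M" unfolding L_def using measG by measurable
  have dir1: "(\<integral>\<^sup>+ \<omega>. ennreal (L \<omega>) \<partial>M) < \<infinity>" if "(\<integral>\<^sup>+ \<omega>. ennreal (L \<omega>) * K \<omega> \<partial>M) < \<infinity>"
  proof -
    note that
    moreover have "(\<integral>\<^sup>+ \<omega>. ennreal (L \<omega>) \<partial>M) \<le> (\<integral>\<^sup>+ \<omega>. ennreal (L \<omega>) * K \<omega> \<partial>M)"
    proof (intro nn_integral_mono_AE eventually_mono[OF AEK])
      fix \<omega> assume "1 \<le> K \<omega> \<and> ennreal (L \<omega>) * K \<omega> \<le> 2 * ennreal (L \<omega>) + 2"
      then have "ennreal (L \<omega>) * 1 \<le> ennreal (L \<omega>) * K \<omega>" by (intro mult_left_mono) auto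
      then show "ennreal (L \<omega>) \<le> ennreal (L \<omega>) * K \<omega>" by simp
    qed
    ultimately show "(\<integral>\<^sup>+ \<omega>. ennreal (L \<omega>) \<partial>M) < \<infinity>" by simp
  qed
  have dir2: "(\<integral>\<^sup>+ \<omega>. ennreal (L \<omega>) * K \<omega> \<partial>M) < \<infinity>" if fin: "(\<integral>\<^sup>+ \<omega>. ennreal (L \<omega>) \<partial>M) < \<infinity>"
  proof -
    have "(\<integral>\<^sup>+ \<omega>. ennreal (L \<omega>) * K \<omega> \<partial>M) \<le> (\<integral>\<^sup>+ \<omega>. 2 * ennreal (L \<omega>) + 2 \<partial>M)"
      by (intro nn_integral_mono_AE eventually_mono[OF AEK]) auto
    also have "\<dots> = 2 * (\<integral>\<^sup>+ \<omega>. ennreal (L \<omega>) \<partial>M) + 2"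
      using measL by (simp add: nn_integral_add nn_integral_cmult emeasure_space_1)
    also have "\<dots> < \<infinity>" using fin by (simp add: ennreal_mult_less_top)
    finally show "(\<integral>\<^sup>+ \<omega>. ennreal (L \<omega>) * K \<omega> \<partial>M) < \<infinity>" .
  qed
  show ?thesis using dir1 dir2 unfolding L_def K_def by blast
qed

end
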